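(* Any connected stratified surface $\Omega$ with $\mu(\Omega)\le 0$ (a trivial surface) is isomorphic to one of: the sphere without special points; the projective plane without special points; the disc without special points; the sphere with one interior special point; the disc with one boundary special point and no interior special points; the sphere with two interior special points; the projective plane with one interior special point; the torus without special points; the Klein bottle without special points; the disc with one interior special point and no boundary special points; the disc with two boundary special points and no interior special points; the Möbius band without special points; the cylinder without special points.
   Context: A stratified surface is a compact topological 2-manifold (possibly with boundary, possibly nonorientable) with a finite set of special points, some in the interior and some on the boundary; isomorphisms are homeomorphisms preserving the sets of interior and of boundary special points. A connected orientable surface which is a sphere with $g$ handles and $s$ holes has genus $g$; a connected nonorientable surface which is a projective plane (resp. Klein bottle) with $a$ handles and $s$ holes has genus $g=a+\tfrac12$ (resp. $g=a+1$). For a stratified surface with connected components $\Omega^1,\dots,\Omega^c$, where $\Omega^i$ has genus $g^i$, $s^i$ boundary contours carrying $m^i_1,\dots,m^i_{s^i}$ special points, and $m^i$ interior special points, $\mu(\Omega)=\sum_i2g^i+\sum_im^i+\sum_is^i+\frac12\sum_i\sum_jm^i_j-2c$. *)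

theory Defs
  imports "HOL-Analysis.Analysis"
begin

definition quotient_topology :: "'a topology \<Rightarrow> ('a \<Rightarrow> 'b) \<Rightarrow> 'b topology" where
  "quotient_topology X f =
     topology (\<lambda>U. U \<subseteq> f ` topspace X \<and> openin X {x \<in> topspace X. f x \<in> U})"

definition half_plane :: "complex set" where
  "half_plane = {z. 0 \<le> Im z}"

definition surface_with_boundary :: "'a topology \<Rightarrow> bool" where
  "surface_with_boundary X \<longleftrightarrow> compact_space X \<and> Hausdorff_space X \<and>
     (\<forall>x\<in>topspace X. \<exists>U V. openin X U \<and> x \<in> U \<and> openin (top_of_set half_plane) V \<and>
        subtopology X U homeomorphic_space top_of_set V)"

definition surf_interior :: "'a topology \<Rightarrow> 'a set" where
  "surf_interior X = {x \<in> topspace X. \<exists>U V. openin X U \<and> x \<in> U \<and> open (V::complex set) \<and>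
        subtopology X U homeomorphic_space top_of_set V}"

definition surf_boundary :: "'a topology \<Rightarrow> 'a set" where
  "surf_boundary X = topspace X - surf_interior X"

definition stratified_surface :: "'a topology \<Rightarrow> 'a set \<Rightarrow> 'a set \<Rightarrow> bool" where
  "stratified_surface X A B \<longleftrightarrow> surface_with_boundary X \<and> finite A \<and> finite B \<and>
     A \<subseteq> surf_interior X \<and> B \<subseteq> surf_boundary X"

definition strat_iso :: "'a topology \<Rightarrow> 'a set \<Rightarrow> 'a set \<Rightarrow> 'b topology \<Rightarrow> 'b set \<Rightarrow> 'b set \<Rightarrow> bool" where
  "strat_iso X A B Y A' B' \<longleftrightarrow> (\<exists>f. homeomorphic_map X Y f \<and> f ` A = A' \<and> f ` B = B')"

text \<open>Edge words: a letter is a pair (namespace, index), paired with an orientation sign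
  (True = a, False = a^-1).  Namespaces: 0 handle letters, 1 cross-cap letters,
  2 hole-connecting letters, 3 free (boundary) hole edges.\<close>
type_synonym edge_word = "((nat \<times> nat) \<times> bool) list"

definition handles_word :: "nat \<Rightarrow> edge_word" where
  "handles_word g = concat (map (\<lambda>i. [((0, 2*i), True), ((0, 2*i+1), True),
                                      ((0, 2*i), False), ((0, 2*i+1), False)]) [0..<g])"

definition holes_word :: "nat \<Rightarrow> edge_word" where
  "holes_word s = concat (map (\<lambda>i. [((2, i), True), ((3, i), True), ((2, i), False)]) [0..<s])"

text \<open>Connected surfaces: sphere / projective plane / Klein bottle with a handles.\<close>
datatype surf_kind = Sphere_H nat | Proj_H nat | Klein_H nat

fun kind_word :: "surf_kind \<Rightarrow> edge_word" where
  "kind_word (Sphere_H a) = handles_word a"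
| "kind_word (Proj_H a) = [((1,0), True), ((1,0), True)] @ handles_word a"
| "kind_word (Klein_H a) = [((1,0), True), ((1,0), True), ((1,1), True), ((1,1), True)] @ handles_word a"

fun kind_genus :: "surf_kind \<Rightarrow> real" where
  "kind_genus (Sphere_H a) = real a"
| "kind_genus (Proj_H a) = real a + 1/2"
| "kind_genus (Klein_H a) = real a + 1"

text \<open>Word of the surface of kind k with s holes (the empty word is replaced by a a^-1: sphere).\<close>
definition model_word :: "surf_kind \<Rightarrow> nat \<Rightarrow> edge_word" where
  "model_word k s = (let w = kind_word k @ holes_word s in
                     if w = [] then [((0,0), True), ((0,0), False)] else w)"

text \<open>The closed unit disc viewed as an n-gon: point at parameter t of edge j.\<close>
definition edge_pt :: "nat \<Rightarrow> nat \<Rightarrow> real \<Rightarrow> complex" where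
  "edge_pt n j t = cis (2 * pi * (real j + t) / real n)"

definition edge_glue :: "edge_word \<Rightarrow> complex \<Rightarrow> complex \<Rightarrow> bool" where
  "edge_glue w z z' \<longleftrightarrow> (\<exists>j j' t. j < length w \<and> j' < length w \<and> j \<noteq> j' \<and>
      fst (w ! j) = fst (w ! j') \<and> 0 \<le> t \<and> t \<le> 1 \<and>
      z = edge_pt (length w) j t \<and>
      z' = edge_pt (length w) j' (if snd (w ! j) = snd (w ! j') then t else 1 - t))"

definition glue_equiv :: "edge_word \<Rightarrow> complex \<Rightarrow> complex \<Rightarrow> bool" where
  "glue_equiv w = (\<lambda>z z'. edge_glue w z z' \<or> edge_glue w z' z)\<^sup>*\<^sup>*"

definition polygon_surface :: "edge_word \<Rightarrow> complex set topology" where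
  "polygon_surface w = quotient_topology (top_of_set (cball 0 1))
       (\<lambda>z. {z' \<in> cball 0 1. glue_equiv w z z'})"

definition surface_model :: "surf_kind \<Rightarrow> nat \<Rightarrow> complex set topology" where
  "surface_model k s = polygon_surface (model_word k s)"

text \<open>\<open>mu\<close> of a connected stratified surface of kind k (genus kind_genus k) with s boundary
  contours, m interior special points and b boundary special points in total.\<close>
definition mu_conn :: "surf_kind \<Rightarrow> nat \<Rightarrow> nat \<Rightarrow> nat \<Rightarrow> real" where
  "mu_conn k s m b = 2 * kind_genus k + real m + real s + real b / 2 - 2"

definition iso_to_model :: "'a topology \<Rightarrow> 'a set \<Rightarrow> 'a set \<Rightarrow> surf_kind \<Rightarrow> nat \<Rightarrow> nat \<Rightarrow> nat \<Rightarrow> bool" where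
  "iso_to_model X A B k s p q \<longleftrightarrow> (\<exists>A' B'. stratified_surface (surface_model k s) A' B' \<and>
      card A' = p \<and> card B' = q \<and> strat_iso X A B (surface_model k s) A' B')"

end

theory Submission
  imports Defs
begin



lemma qt_istop: "istopology (\<lambda>U. U \<subseteq> f ` topspace X \<and> openin X {x \<in> topspace X. f x \<in> U})"
  unfolding istopology_def
proof (rule conjI; intro allI impI)
  fix S T assume "S \<subseteq> f ` topspace X \<and> openin X {x \<in> topspace X. f x \<in> S}"
    "T \<subseteq> f ` topspace X \<and> openin X {x \<in> topspace X. f x \<in> T}"
  moreover have "{x \<in> topspace X. f x \<in> S \<inter> T} = {x \<in> topspace X. f x \<in> S} \<inter> {x \<in> topspace X. f x \<in> T}" by auto
  ultimately show "S \<inter> T \<subseteq> f ` topspace X \<and> openin X {x \<in> topspace X. f x \<in> S \<inter> T}" by auto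
next
  fix K assume K: "\<forall>S\<in>K. S \<subseteq> f ` topspace X \<and> openin X {x \<in> topspace X. f x \<in> S}"
  have "{x \<in> topspace X. f x \<in> \<Union>K} = \<Union>((\<lambda>S. {x \<in> topspace X. f x \<in> S}) ` K)" by auto
  moreover have "openin X (\<Union>((\<lambda>S. {x \<in> topspace X. f x \<in> S}) ` K))" using K by auto
  ultimately show "\<Union>K \<subseteq> f ` topspace X \<and> openin X {x \<in> topspace X. f x \<in> \<Union>K}" using K by auto
qed

lemma qt_openin: "openin (quotient_topology X f) U \<longleftrightarrow> U \<subseteq> f ` topspace X \<and> openin X {x \<in> topspace X. f x \<in> U}"
  unfolding quotient_topology_def topology_inverse'[OF qt_istop] by simp

lemma qt_topspace: "topspace (quotient_topology X f) = f ` topspace X"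
proof -
  have "openin (quotient_topology X f) (f ` topspace X)"
    unfolding qt_openin by (simp add: Collect_conj_eq[symmetric]) (metis (no_types, lifting) Collect_mem_eq Collect_cong image_eqI openin_topspace)
  then have "f ` topspace X \<subseteq> topspace (quotient_topology X f)" by (rule openin_subset)
  moreover have "topspace (quotient_topology X f) \<subseteq> f ` topspace X"
    using qt_openin[of X f "topspace (quotient_topology X f)"] by simp
  ultimately show ?thesis by blast
qed

lemma qt_cont: "continuous_map X (quotient_topology X f) f"
  unfolding continuous_map_def qt_topspace
  by (auto simp: qt_openin)

lemma chart_transfer:
  assumes hom: "homeomorphic_map X Y f" and x: "x \<in> topspace X"
    and ch: "\<exists>U V. openin X U \<and> x \<in> U \<and> P V \<and> subtopology X U homeomorphic_space top_of_set V"
  shows "\<exists>U V. openin Y U \<and> f x \<in> U \<and> P V \<and> subtopology Y U homeomorphic_space top_of_set V"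
proof -
  obtain U V where U: "openin X U" "x \<in> U" "P V" "subtopology X U homeomorphic_space top_of_set V"
    using ch by blast
  have Us: "U \<subseteq> topspace X" using U(1) openin_subset by blast
  have "openin Y (f ` U)" using homeomorphic_map_openness[OF hom Us] U(1) by simp
  moreover have "homeomorphic_map (subtopology X U) (subtopology Y (f ` U)) f"
    apply (rule homeomorphic_map_subtopologies[OF hom])
    using Us hom by (metis homeomorphic_imp_surjective_map image_mono inf.absorb_iff2 inf_commute)
  then have "subtopology Y (f ` U) homeomorphic_space subtopology X U"
    using homeomorphic_map_imp_homeomorphic_space homeomorphic_space_sym by blast
  ultimately show ?thesis using U homeomorphic_space_trans by blast
qed

lemma interior_transfer:
  assumes hom: "homeomorphic_map X Y f" and x: "x \<in> surf_interior X"
  shows "f x \<in> surf_interior Y"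
proof -
  have xt: "x \<in> topspace X" using x by (simp add: surf_interior_def)
  have "\<exists>U V. openin X U \<and> x \<in> U \<and> open V \<and> subtopology X U homeomorphic_space top_of_set (V::complex set)"
    using x by (simp add: surf_interior_def)
  from chart_transfer[OF hom xt this] show ?thesis
    using xt hom unfolding surf_interior_def
    by (metis (no_types, lifting) homeomorphic_imp_surjective_map image_eqI mem_Collect_eq)
qed

lemma boundary_transfer:
  assumes hom: "homeomorphic_map X Y f" and x: "x \<in> surf_boundary X"
  shows "f x \<in> surf_boundary Y"
proof -
  obtain g where g: "homeomorphic_maps X Y f g" using hom homeomorphic_map_maps by blast
  then have hg: "homeomorphic_map Y X g" using homeomorphic_maps_map by blast
  have xt: "x \<in> topspace X" and xn: "x \<notin> surf_interior X" using x by (auto simp: surf_boundary_def)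
  have fx: "f x \<in> topspace Y" using hom xt homeomorphic_imp_surjective_map by blast
  have "g (f x) = x" using g xt by (simp add: homeomorphic_maps_def)
  then have "f x \<notin> surf_interior Y" using interior_transfer[OF hg] xn by metis
  then show ?thesis using fx by (simp add: surf_boundary_def)
qed

lemma surface_transfer:
  assumes hom: "homeomorphic_map X Y f" and S: "surface_with_boundary X"
  shows "surface_with_boundary Y"
proof -
  have hs: "X homeomorphic_space Y" using hom homeomorphic_map_imp_homeomorphic_space by blast
  have "compact_space Y" using S hs homeomorphic_compact_space by (auto simp: surface_with_boundary_def)
  moreover have "Hausdorff_space Y" using S hs homeomorphic_Hausdorff_space by (auto simp: surface_with_boundary_def)
  moreover have "\<forall>y\<in>topspace Y. \<exists>U V. openin Y U \<and> y \<in> U \<and> openin (top_of_set half_plane) V \<and>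
        subtopology Y U homeomorphic_space top_of_set V"
  proof
    fix y assume "y \<in> topspace Y"
    then obtain x where x: "x \<in> topspace X" "y = f x" using hom homeomorphic_imp_surjective_map by blast
    show "\<exists>U V. openin Y U \<and> y \<in> U \<and> openin (top_of_set half_plane) V \<and>
        subtopology Y U homeomorphic_space top_of_set V"
      using chart_transfer[OF hom x(1), of "openin (top_of_set half_plane)"] S x
      unfolding surface_with_boundary_def by blast
  qed
  ultimately show ?thesis by (simp add: surface_with_boundary_def)
qed



lemma rtc_inv:
  assumes R: "\<And>z z'. R z z' \<Longrightarrow> cmod z = 1 \<and> z' = \<tau> z"
    and inv: "\<And>z. \<tau> (\<tau> z) = z" and nm: "\<And>z. cmod (\<tau> z) = cmod z"
    and h: "(\<lambda>z z'. R z z' \<or> R z' z)\<^sup>*\<^sup>* a b"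
  shows "b = a \<or> (cmod a = 1 \<and> b = \<tau> a)"
  using h
proof (induction rule: rtranclp_induct)
  case base then show ?case by simp
next
  case (step b c)
  have "cmod b = 1 \<and> c = \<tau> b" using step(2) R inv nm by metis
  then show ?case using step(3) inv nm by metis
qed

lemma unit_cis: "cmod z = 1 \<Longrightarrow> z = cis (Arg2pi z)"
  using Arg2pi[of z] by (simp add: is_Arg_def cis_conv_exp)

definition w_sph :: edge_word where "w_sph = [((0,0),True),((0,0),False)]"
definition w_rp :: edge_word where "w_rp = [((1,0),True),((1,0),True)]"

lemma model_sph: "surface_model (Sphere_H 0) 0 = polygon_surface w_sph"
  by (simp add: surface_model_def model_word_def handles_word_def holes_word_def w_sph_def)
lemma model_rp: "surface_model (Proj_H 0) 0 = polygon_surface w_rp"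
  by (simp add: surface_model_def model_word_def handles_word_def holes_word_def w_rp_def)

lemma edge_pt2: "edge_pt (Suc (Suc 0)) j t = cis (pi * (real j + t))"
  by (simp add: edge_pt_def)

lemma cis_2pi_minus: "cis (2*pi - x) = cnj (cis x)"
  by (simp add: complex_eq_iff)
lemma cis_pi_plus: "cis (pi + x) = - cis x"
  by (simp add: complex_eq_iff)

lemma less2: "(j::nat) < Suc (Suc 0) \<longleftrightarrow> j = 0 \<or> j = 1" by auto

lemma glue_sph_fwd:
  assumes "edge_glue w_sph z z'" shows "cmod z = 1 \<and> z' = cnj z"
proof -
  obtain j j' t where h: "j < Suc (Suc 0)" "j' < Suc (Suc 0)" "j \<noteq> j'" "0 \<le> t" "t \<le> 1"
    "z = edge_pt (Suc (Suc 0)) j t"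
    "z' = edge_pt (Suc (Suc 0)) j' (if snd (w_sph ! j) = snd (w_sph ! j') then t else 1 - t)"
    using assms unfolding edge_glue_def by (auto simp: w_sph_def)
  have "j = 0 \<and> j' = 1 \<or> j = 1 \<and> j' = 0" using h(1-3) by auto
  then show ?thesis
  proof
    assume j: "j = 0 \<and> j' = 1"
    have z: "z = cis (pi*t)" using h j by (simp add: edge_pt2)
    have "z' = cis (pi * (1 + (1 - t)))" using h j by (simp add: edge_pt2 w_sph_def)
    also have "pi * (1 + (1 - t)) = 2*pi - pi*t" by (simp add: algebra_simps)
    finally show ?thesis using z cis_2pi_minus[of "pi*t"] by simp
  next
    assume j: "j = 1 \<and> j' = 0"
    have z: "z = cis (pi*(1+t))" using h j by (simp add: edge_pt2)
    have "z' = cis (pi * (0 + (1 - t)))" using h j by (simp add: edge_pt2 w_sph_def)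
    also have "pi * (0 + (1 - t)) = 2*pi - pi*(1+t)" by (simp add: algebra_simps)
    finally show ?thesis using z cis_2pi_minus[of "pi*(1+t)"] by simp
  qed
qed

lemma glue_rp_fwd:
  assumes "edge_glue w_rp z z'" shows "cmod z = 1 \<and> z' = - z"
proof -
  obtain j j' t where h: "j < Suc (Suc 0)" "j' < Suc (Suc 0)" "j \<noteq> j'" "0 \<le> t" "t \<le> 1"
    "z = edge_pt (Suc (Suc 0)) j t"
    "z' = edge_pt (Suc (Suc 0)) j' (if snd (w_rp ! j) = snd (w_rp ! j') then t else 1 - t)"
    using assms unfolding edge_glue_def by (auto simp: w_rp_def)
  have "j = 0 \<and> j' = 1 \<or> j = 1 \<and> j' = 0" using h(1-3) by auto
  then show ?thesis
  proof
    assume j: "j = 0 \<and> j' = 1"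
    have z: "z = cis (pi*t)" using h j by (simp add: edge_pt2)
    have "z' = cis (pi * (1 + t))" using h j by (simp add: edge_pt2 w_rp_def)
    also have "pi * (1 + t) = pi + pi*t" by (simp add: algebra_simps)
    finally show ?thesis using z cis_pi_plus[of "pi*t"] by simp
  next
    assume j: "j = 1 \<and> j' = 0"
    have z: "z = cis (pi*(1+t))" using h j by (simp add: edge_pt2)
    have "z' = cis (pi * (0 + t))" using h j by (simp add: edge_pt2 w_rp_def)
    moreover have "pi*(1+t) = pi + pi*t" by (simp add: algebra_simps)
    ultimately show ?thesis using z cis_pi_plus[of "pi*t"] by simp
  qed
qed

lemma glue_sph_bwd:
  assumes "cmod z = 1" shows "edge_glue w_sph z (cnj z)"
proof -
  define th where "th = Arg2pi z"
  have z: "z = cis th" using unit_cis[OF assms] th_def by simp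
  have th: "0 \<le> th" "th < 2*pi" using Arg2pi[of z] th_def by auto
  show ?thesis
  proof (cases "th \<le> pi")
    case True
    have e1: "pi * (real 0 + th/pi) = th" by simp
    have e2: "pi * (2 - th/pi) = 2*pi - th" by (simp add: field_simps)
    show ?thesis unfolding edge_glue_def
      apply (rule exI[of _ 0], rule exI[of _ 1], rule exI[of _ "th/pi"])
      using True th z cis_2pi_minus[of th] by (simp add: w_sph_def edge_pt2 e1 e2)
  next
    case False
    have e1: "pi * (real 1 + (th/pi - 1)) = th" by (simp add: field_simps)
    have e2: "pi * (2 - th/pi) = 2*pi - th" by (simp add: field_simps)
    have e3: "th / pi \<le> 2" using th by (simp add: field_simps)
    show ?thesis unfolding edge_glue_def
      apply (rule exI[of _ 1], rule exI[of _ 0], rule exI[of _ "th/pi - 1"])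
      using False th z cis_2pi_minus[of th] by (simp add: w_sph_def edge_pt2 e1 e2 e3)
  qed
qed

lemma glue_rp_bwd:
  assumes "cmod z = 1" shows "edge_glue w_rp z (- z)"
proof -
  define th where "th = Arg2pi z"
  have z: "z = cis th" using unit_cis[OF assms] th_def by simp
  have th: "0 \<le> th" "th < 2*pi" using Arg2pi[of z] th_def by auto
  show ?thesis
  proof (cases "th \<le> pi")
    case True
    have e1: "pi * (real 0 + th/pi) = th" by simp
    have e2: "pi * (1 + th/pi) = pi + th" by (simp add: field_simps)
    show ?thesis unfolding edge_glue_def
      apply (rule exI[of _ 0], rule exI[of _ 1], rule exI[of _ "th/pi"])
      using True th z cis_pi_plus[of th] by (simp add: w_rp_def edge_pt2 e1 e2)
  next
    case False
    have e1: "pi * (real 1 + (th/pi - 1)) = pi + (th - pi)" by (simp add: field_simps)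
    have e2: "pi * (th/pi - 1) = th - pi" by (simp add: field_simps)
    have e3: "th / pi \<le> 2" using th by (simp add: field_simps)
    show ?thesis unfolding edge_glue_def
      apply (rule exI[of _ 1], rule exI[of _ 0], rule exI[of _ "th/pi - 1"])
      using False th z cis_pi_plus[of "th - pi"] by (simp add: w_rp_def edge_pt2 e1 e2 e3)
  qed
qed

lemma ge_sph: "glue_equiv w_sph a b \<longleftrightarrow> b = a \<or> (cmod a = 1 \<and> b = cnj a)"
proof
  assume "glue_equiv w_sph a b"
  then show "b = a \<or> (cmod a = 1 \<and> b = cnj a)"
    unfolding glue_equiv_def using rtc_inv[of "edge_glue w_sph" cnj a b, OF glue_sph_fwd] by auto
next
  assume "b = a \<or> (cmod a = 1 \<and> b = cnj a)"
  then show "glue_equiv w_sph a b" unfolding glue_equiv_def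
    using glue_sph_bwd by (metis (mono_tags, lifting) r_into_rtranclp rtranclp.rtrancl_refl)
qed

lemma ge_rp: "glue_equiv w_rp a b \<longleftrightarrow> b = a \<or> (cmod a = 1 \<and> b = - a)"
proof
  assume "glue_equiv w_rp a b"
  then show "b = a \<or> (cmod a = 1 \<and> b = - a)"
    unfolding glue_equiv_def using rtc_inv[of "edge_glue w_rp" uminus a b, OF glue_rp_fwd] by auto
next
  assume "b = a \<or> (cmod a = 1 \<and> b = - a)"
  then show "glue_equiv w_rp a b" unfolding glue_equiv_def
    using glue_rp_bwd by (metis (mono_tags, lifting) r_into_rtranclp rtranclp.rtrancl_refl)
qed

lemma chart_lemma:
  fixes q :: "complex \<Rightarrow> 'b" and G :: "complex \<Rightarrow> 'b"
  assumes H: "Hausdorff_space (quotient_topology (top_of_set D) q)"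
    and r: "0 < r"
    and G: "continuous_map (top_of_set (cball 0 r)) (quotient_topology (top_of_set D) q) G"
    and inj: "inj_on G (cball 0 r)"
    and P: "openin (top_of_set D) P"
    and Pchar: "\<And>w. w \<in> D \<Longrightarrow> w \<in> P \<longleftrightarrow> (\<exists>u\<in>ball 0 r. q w = G u)"
    and p: "p \<in> G ` ball 0 r"
  shows "p \<in> surf_interior (quotient_topology (top_of_set D) q)"
proof -
  define M where "M = quotient_topology (top_of_set D) q"
  define U where "U = G ` ball 0 r"
  have Gc: "G ` cball 0 r \<subseteq> topspace M"
    using continuous_map_image_subset_topspace[OF G] by (simp add: M_def)
  have Usub: "U \<subseteq> q ` D" using Gc by (auto simp: U_def M_def qt_topspace)
  have PD: "P \<subseteq> D" using openin_subset[OF P] by simp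
  have "{x \<in> D. q x \<in> U} = P" using Pchar PD by (auto simp: U_def)
  then have oU: "openin M U" using Usub P by (simp add: M_def qt_openin)
  have cs: "compact_space (top_of_set (cball (0::complex) r))"
    by (simp add: compact_space_subtopology compactin_subtopology)
  have emb: "embedding_map (top_of_set (cball 0 r)) M G"
    by (rule continuous_imp_embedding_map[OF G[folded M_def] cs H[folded M_def]]) (use inj in simp)
  then have hm: "homeomorphic_map (top_of_set (cball 0 r)) (subtopology M (G ` cball 0 r)) G"
    by (simp add: embedding_map_def)
  have "G ` (topspace (top_of_set (cball 0 r)) \<inter> ball 0 r) = topspace (subtopology M (G ` cball 0 r)) \<inter> U"
    using Gc by (auto simp: U_def)
  from homeomorphic_map_subtopologies[OF hm this]
  have "homeomorphic_map (top_of_set (ball 0 r)) (subtopology M U) G"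
    by (simp add: subtopology_subtopology U_def Int_absorb1 image_mono Int_absorb2)
  then have "subtopology M U homeomorphic_space top_of_set (ball (0::complex) r)"
    using homeomorphic_map_imp_homeomorphic_space homeomorphic_space_sym by blast
  moreover have "p \<in> U" using p by (simp add: U_def)
  ultimately show ?thesis using oU openin_subset[OF oU]
    unfolding surf_interior_def M_def by auto
qed


definition cinv :: "complex \<Rightarrow> complex" where "cinv v = (1 - v) / (1 + v)"
definition rt :: "complex \<Rightarrow> complex" where
  "rt u = of_real (sqrt ((cmod u + Re u)/2)) + \<i> * of_real (sqrt ((cmod u - Re u)/2))"
definition vv :: "complex \<Rightarrow> complex" where "vv u = (if Im u \<le> 0 then cnj (rt u) else rt u)"

lemma rt_re: "Re (rt u) = sqrt ((cmod u + Re u)/2)" and rt_im: "Im (rt u) = sqrt ((cmod u - Re u)/2)"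
  by (simp_all add: rt_def)

lemma rt_sq: "(rt u)^2 = Complex (Re u) \<bar>Im u\<bar>"
proof -
  have a: "\<bar>Re u\<bar> \<le> cmod u" by (rule abs_Re_le_cmod)
  have X: "0 \<le> (cmod u + Re u)/2" "0 \<le> (cmod u - Re u)/2" using a by auto
  have c2: "(cmod u)^2 = (Re u)^2 + (Im u)^2" by (simp add: cmod_power2)
  have "2 * (sqrt ((cmod u + Re u)/2) * sqrt ((cmod u - Re u)/2)) = 2 * sqrt (((cmod u)^2 - (Re u)^2)/4)"
    by (simp add: real_sqrt_mult[symmetric] power2_eq_square algebra_simps)
  also have "\<dots> = sqrt ((Im u)^2)" using c2 by (simp add: real_sqrt_divide)
  also have "\<dots> = \<bar>Im u\<bar>" by simp
  finally have im: "2 * (sqrt ((cmod u + Re u)/2) * sqrt ((cmod u - Re u)/2)) = \<bar>Im u\<bar>" .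
  show ?thesis using X im
    by (simp add: complex_eq_iff power2_eq_square rt_re rt_im algebra_simps) (simp add: field_simps)
qed

lemma vv_sq: "(vv u)^2 = u"
proof (cases "Im u \<le> 0")
  case True
  have "(cnj (rt u))^2 = cnj ((rt u)^2)" by simp
  then show ?thesis using True by (simp add: vv_def rt_sq complex_eq_iff)
next
  case False then show ?thesis by (simp add: vv_def rt_sq complex_eq_iff)
qed

lemma vv_re: "0 \<le> Re (vv u)"
  using abs_Re_le_cmod[of u] by (simp add: vv_def rt_re)

lemma rt_Im0: "Im u = 0 \<Longrightarrow> Re (rt u) = 0 \<or> Im (rt u) = 0"
  by (cases "0 \<le> Re u") (auto simp: rt_re rt_im cmod_def)

lemma C1: "0 \<le> Re v \<Longrightarrow> 1 + v \<noteq> 0"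
  by (metis add.commute add_neg_numeral_special(8) neg_0_le_iff_le not_one_le_zero plus_complex.simps(1) zero_complex.simps(1) add_eq_0_iff Re_complex_of_real complex_Re_numeral one_complex.simps(1) uminus_complex.simps(1))

lemma cmod_sq_expand: "(cmod (1 + v))^2 = 1 + 2 * Re v + (cmod v)^2" "(cmod (1 - v))^2 = 1 - 2 * Re v + (cmod v)^2"
  by (simp only: cmod_power2; simp add: power2_eq_square algebra_simps)+

lemma C2: assumes "0 \<le> Re v" shows "cmod (cinv v) \<le> 1"
proof -
  have "(cmod (1 - v))^2 \<le> (cmod (1 + v))^2" using cmod_sq_expand assms by simp
  then have "cmod (1 - v) \<le> cmod (1 + v)" by (simp add: power2_le_iff_abs_le)
  then show ?thesis using C1[OF assms] by (simp add: cinv_def norm_divide divide_le_eq_1)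
qed

lemma C3: assumes "Re v = 0" shows "cmod (cinv v) = 1"
proof -
  have "(cmod (1 - v))^2 = (cmod (1 + v))^2" using cmod_sq_expand assms by simp
  then have "cmod (1 - v) = cmod (1 + v)" by (simp add: power2_eq_iff_nonneg)
  then show ?thesis using C1[of v] assms by (simp add: cinv_def norm_divide)
qed

lemma C4: "cnj (cinv v) = cinv (cnj v)"
  by (simp add: cinv_def)

lemma C5: "z \<noteq> -1 \<Longrightarrow> cinv (cinv z) = z"
proof -
  assume z: "z \<noteq> -1"
  then have z1: "1 + z \<noteq> 0" by (metis add.commute add_eq_0_iff)
  have "1 + (1 - z)/(1 + z) = 2/(1+z)" using z1 by (simp add: field_simps)
  moreover have "1 - (1 - z)/(1 + z) = 2*z/(1+z)" using z1 by (simp add: field_simps)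
  ultimately show ?thesis using z1 by (simp add: cinv_def)
qed

lemma C6: assumes "cmod z \<le> 1" "z \<noteq> -1" shows "0 \<le> Re (cinv z)"
proof -
  have z1: "1 + z \<noteq> 0" using assms(2) by (metis add.commute add_eq_0_iff)
  have "cnj (1 + z) \<noteq> 0" using z1 by (metis complex_cnj_zero_iff)
  then have e1: "((1 - z) * cnj (1 + z)) / ((1 + z) * cnj (1 + z)) = (1 - z) / (1 + z)"
    by (rule mult_divide_mult_cancel_right)
  have e2: "of_real ((cmod (1 + z))^2) = (1 + z) * cnj (1 + z)" by (simp only: complex_norm_square)
  have "cinv z = ((1 - z) * cnj (1 + z)) / of_real ((cmod (1 + z))^2)"
    unfolding e2 e1 cinv_def ..
  moreover have "Re ((1 - z) * cnj (1 + z)) = 1 - (cmod z)^2"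
    by (simp only: cmod_power2; simp add: power2_eq_square algebra_simps)
  moreover have "0 \<le> 1 - (cmod z)^2" using assms(1) norm_ge_zero by (simp add: power_le_one abs_square_le_1)
  ultimately show ?thesis by (simp add: Re_divide_of_real)
qed

lemma C7: assumes "cmod z = 1" shows "Re (cinv z) = 0"
proof (cases "z = -1")
  case True then show ?thesis by (simp add: cinv_def)
next
  case False
  have z1: "1 + z \<noteq> 0" using False by (metis add.commute add_eq_0_iff)
  have "cnj (1 + z) \<noteq> 0" using z1 by (metis complex_cnj_zero_iff)
  then have e1: "((1 - z) * cnj (1 + z)) / ((1 + z) * cnj (1 + z)) = (1 - z) / (1 + z)"
    by (rule mult_divide_mult_cancel_right)
  have e2: "of_real ((cmod (1 + z))^2) = (1 + z) * cnj (1 + z)" by (simp only: complex_norm_square)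
  have "cinv z = ((1 - z) * cnj (1 + z)) / of_real ((cmod (1 + z))^2)"
    unfolding e2 e1 cinv_def ..
  moreover have "Re ((1 - z) * cnj (1 + z)) = 1 - (cmod z)^2"
    by (simp only: cmod_power2; simp add: power2_eq_square algebra_simps)
  ultimately show ?thesis using assms by (simp add: Re_divide_of_real)
qed

lemma C9: assumes "0 \<le> Re v" shows "cmod (1 - cinv v) = cmod v * cmod (1 + cinv v)" and "1 + cinv v \<noteq> 0"
proof -
  have v1: "1 + v \<noteq> 0" using C1[OF assms] .
  have a: "1 - cinv v = 2 * v / (1 + v)" using v1 by (simp add: cinv_def field_simps)
  have b: "1 + cinv v = 2 / (1 + v)" using v1 by (simp add: cinv_def field_simps)
  show "cmod (1 - cinv v) = cmod v * cmod (1 + cinv v)" unfolding a b by (simp add: norm_divide norm_mult)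
  show "1 + cinv v \<noteq> 0" unfolding b using v1 by simp
qed




definition qm :: "edge_word \<Rightarrow> complex \<Rightarrow> complex set" where
  "qm w z = {z' \<in> cball 0 1. glue_equiv w z z'}"

lemma ps_eq: "polygon_surface w = quotient_topology (top_of_set (cball 0 1)) (qm w)"
  unfolding polygon_surface_def qm_def by (rule refl)

lemma qm_sph: assumes "z \<in> cball 0 1" "z' \<in> cball 0 1"
  shows "qm w_sph z = qm w_sph z' \<longleftrightarrow> (z' = z \<or> (cmod z = 1 \<and> z' = cnj z))"
proof
  assume "qm w_sph z = qm w_sph z'"
  moreover have "z' \<in> qm w_sph z'" using assms by (simp add: qm_def ge_sph)
  ultimately have "z' \<in> qm w_sph z" by simp
  then show "z' = z \<or> (cmod z = 1 \<and> z' = cnj z)" by (simp add: qm_def ge_sph)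
next
  assume "z' = z \<or> (cmod z = 1 \<and> z' = cnj z)"
  then show "qm w_sph z = qm w_sph z'" by (auto simp: qm_def ge_sph)
qed

lemma qm_rp: assumes "z \<in> cball 0 1" "z' \<in> cball 0 1"
  shows "qm w_rp z = qm w_rp z' \<longleftrightarrow> (z' = z \<or> (cmod z = 1 \<and> z' = - z))"
proof
  assume "qm w_rp z = qm w_rp z'"
  moreover have "z' \<in> qm w_rp z'" using assms by (simp add: qm_def ge_rp)
  ultimately have "z' \<in> qm w_rp z" by simp
  then show "z' = z \<or> (cmod z = 1 \<and> z' = - z)" by (simp add: qm_def ge_rp)
next
  assume "z' = z \<or> (cmod z = 1 \<and> z' = - z)"
  then show "qm w_rp z = qm w_rp z'" by (auto simp: qm_def ge_rp)
qed

lemma paste_lemma: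
  assumes c1: "continuous_on (cball 0 r) f1" and c2: "continuous_on (cball 0 r) f2"
    and i1: "f1 ` cball 0 r \<subseteq> D" and i2: "f2 ` cball 0 r \<subseteq> D"
    and ag: "\<And>u. u \<in> cball 0 r \<Longrightarrow> Im u = 0 \<Longrightarrow> q (f1 u) = q (f2 u)"
  shows "continuous_map (top_of_set (cball 0 r)) (quotient_topology (top_of_set D) q)
           (\<lambda>u. if Im u \<le> 0 then q (f1 u) else q (f2 u))"
proof (rule continuous_map_cases_le)
  show "continuous_map (top_of_set (cball 0 r)) euclideanreal Im"
    by (simp add: continuous_on_Im continuous_on_id)
  show "continuous_map (top_of_set (cball 0 r)) euclideanreal (\<lambda>x. 0)" by simp
  have qc: "continuous_map (top_of_set D) (quotient_topology (top_of_set D) q) q"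
    using qt_cont[of "top_of_set D" q] by simp
  have m1: "continuous_map (top_of_set (cball 0 r)) (top_of_set D) f1" using c1 i1 by auto
  have m2: "continuous_map (top_of_set (cball 0 r)) (top_of_set D) f2" using c2 i2 by auto
  have k1: "continuous_map (top_of_set (cball 0 r)) (quotient_topology (top_of_set D) q) (\<lambda>u. q (f1 u))"
    using continuous_map_compose[OF m1 qc] by (simp add: o_def)
  have k2: "continuous_map (top_of_set (cball 0 r)) (quotient_topology (top_of_set D) q) (\<lambda>u. q (f2 u))"
    using continuous_map_compose[OF m2 qc] by (simp add: o_def)
  show "continuous_map (subtopology (top_of_set (cball 0 r)) {x \<in> topspace (top_of_set (cball 0 r)). Im x \<le> 0})
     (quotient_topology (top_of_set D) q) (\<lambda>u. q (f1 u))"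
    by (rule continuous_map_from_subtopology[OF k1])
  show "continuous_map (subtopology (top_of_set (cball 0 r)) {x \<in> topspace (top_of_set (cball 0 r)). 0 \<le> Im x})
     (quotient_topology (top_of_set D) q) (\<lambda>u. q (f2 u))"
    by (rule continuous_map_from_subtopology[OF k2])
  show "\<And>x. x \<in> topspace (top_of_set (cball 0 r)) \<Longrightarrow> Im x = 0 \<Longrightarrow> q (f1 x) = q (f2 x)"
    using ag by simp
qed



lemma rt_re_nn: "0 \<le> Re (rt u)"
  using abs_Re_le_cmod[of u] by (simp add: rt_re)

lemma cont_rt: "continuous_on S rt"
  unfolding rt_def by (intro continuous_intros) auto

lemma cont_cinv: assumes "continuous_on S f" "\<And>x. x \<in> S \<Longrightarrow> 0 \<le> Re (f x)"
  shows "continuous_on S (\<lambda>x. cinv (f x))"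
  unfolding cinv_def using assms C1 by (intro continuous_intros) auto

lemma sph_helper:
  fixes \<sigma> :: complex
  assumes sg: "\<sigma> = 1 \<or> \<sigma> = -1" and z: "cmod z \<le> 1" and nz: "\<sigma> * z \<noteq> -1"
  shows "(cmod (1 - \<sigma> * z))^2 = cmod ((cinv (\<sigma> * z))^2) * (cmod (1 + \<sigma> * z))^2"
    and "0 < cmod (1 + \<sigma> * z)"
proof -
  have m: "cmod (\<sigma> * z) \<le> 1" using sg z by (auto simp: norm_mult)
  define v0 where "v0 = cinv (\<sigma> * z)"
  have r0: "0 \<le> Re v0" using C6[OF m nz] v0_def by simp
  have e: "cinv v0 = \<sigma> * z" using C5[OF nz] v0_def by simp
  have "cmod (1 - cinv v0) = cmod v0 * cmod (1 + cinv v0)" "1 + cinv v0 \<noteq> 0" using C9[OF r0] by auto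
  then show "(cmod (1 - \<sigma> * z))^2 = cmod ((cinv (\<sigma> * z))^2) * (cmod (1 + \<sigma> * z))^2"
     "0 < cmod (1 + \<sigma> * z)"
    unfolding e by (auto simp: v0_def norm_power power_mult_distrib)
qed

lemma sph_chart:
  fixes \<sigma> :: complex
  assumes H: "Hausdorff_space (polygon_surface w_sph)"
    and sg: "\<sigma> = 1 \<or> \<sigma> = -1" and w: "w \<in> cball 0 1" and nw: "\<sigma> * w \<noteq> -1"
  shows "qm w_sph w \<in> surf_interior (polygon_surface w_sph)"
proof -
  let ?D = "cball (0::complex) 1"
  let ?q = "qm w_sph"
  have ss: "\<sigma> * \<sigma> = 1" "cnj \<sigma> = \<sigma>" "cmod \<sigma> = 1" using sg by auto
  define s where "s u = \<sigma> * cinv (vv u)" for u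
  define F where "F z = (cinv (\<sigma> * z))^2" for z
  define r where "r = cmod (F w) + 1"
  define G where "G u = (if Im u \<le> 0 then ?q (\<sigma> * cinv (cnj (rt u))) else ?q (\<sigma> * cinv (rt u)))" for u
  have r: "0 < r" by (simp add: r_def add.commute add_pos_nonneg)
  have hG: "G u = ?q (s u)" for u by (simp add: G_def s_def vv_def)
  have s_in: "s u \<in> ?D" for u
    using C2[OF vv_re[of u]] ss by (simp add: s_def norm_mult)
  have vvn: "vv u \<noteq> -1" for u using vv_re[of u] by (metis C1 add.inverse_inverse add_eq_0_iff)
  have Fs: "F (s u) = u" for u
  proof -
    have "\<sigma> * s u = cinv (vv u)" by (simp add: s_def mult.assoc[symmetric] ss)
    then show ?thesis using C5[OF vvn] vv_sq by (simp add: F_def)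
  qed
  have Fresp: "F (cnj z) = F z" if "cmod z = 1" for z
  proof -
    have "cinv (\<sigma> * cnj z) = cnj (cinv (\<sigma> * z))" by (simp add: C4 ss)
    moreover have "Re (cinv (\<sigma> * z)) = 0" using C7[of "\<sigma> * z"] that ss by (simp add: norm_mult)
    ultimately have "cinv (\<sigma> * cnj z) = - cinv (\<sigma> * z)" by (simp add: complex_eq_iff)
    then show ?thesis by (simp add: F_def)
  qed
  have Gc: "continuous_map (top_of_set (cball 0 r)) (polygon_surface w_sph) G"
    unfolding ps_eq G_def
  proof (rule paste_lemma)
    show "continuous_on (cball 0 r) (\<lambda>u. \<sigma> * cinv (cnj (rt u)))"
      by (intro continuous_intros cont_cinv cont_rt) (simp add: rt_re_nn)
    show "continuous_on (cball 0 r) (\<lambda>u. \<sigma> * cinv (rt u))"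
      by (intro continuous_intros cont_cinv cont_rt) (simp add: rt_re_nn)
    show "(\<lambda>u. \<sigma> * cinv (cnj (rt u))) ` cball 0 r \<subseteq> ?D"
      using C2 rt_re_nn ss by (auto simp: norm_mult)
    show "(\<lambda>u. \<sigma> * cinv (rt u)) ` cball 0 r \<subseteq> ?D"
      using C2 rt_re_nn ss by (auto simp: norm_mult)
    fix u assume "u \<in> cball 0 r" "Im u = 0"
    then consider "Re (rt u) = 0" | "Im (rt u) = 0" using rt_Im0 by blast
    then show "?q (\<sigma> * cinv (cnj (rt u))) = ?q (\<sigma> * cinv (rt u))"
    proof cases
      case 1
      have in2: "\<sigma> * cinv (rt u) \<in> ?D" using C2 rt_re_nn ss by (auto simp: norm_mult)
      have in1: "\<sigma> * cinv (cnj (rt u)) \<in> ?D" using C2[of "cnj (rt u)"] rt_re_nn ss by (auto simp: norm_mult)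
      have m1: "cmod (\<sigma> * cinv (rt u)) = 1" using C3[OF 1] ss by (simp add: norm_mult)
      have "\<sigma> * cinv (cnj (rt u)) = cnj (\<sigma> * cinv (rt u))" by (simp add: C4[symmetric] ss)
      then show ?thesis using qm_sph[OF in2 in1] m1 by simp
    next
      case 2
      then have "cnj (rt u) = rt u" by (simp add: complex_eq_iff)
      then show ?thesis by simp
    qed
  qed
  have inj: "inj_on G (cball 0 r)"
  proof (rule inj_onI)
    fix u u' assume "u \<in> cball 0 r" "u' \<in> cball 0 r" "G u = G u'"
    then have "?q (s u) = ?q (s u')" by (simp add: hG)
    then have "s u' = s u \<or> (cmod (s u) = 1 \<and> s u' = cnj (s u))" using qm_sph[OF s_in s_in] by simp
    then have "F (s u') = F (s u)" using Fresp by auto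
    then show "u = u'" using Fs by simp
  qed
  define P where "P = {z \<in> ?D. (cmod (1 - \<sigma> * z))^2 < r * (cmod (1 + \<sigma> * z))^2}"
  have Pchar0: "z \<in> P \<longleftrightarrow> \<sigma> * z \<noteq> -1 \<and> cmod (F z) < r" if "z \<in> ?D" for z
  proof (cases "\<sigma> * z = -1")
    case True then show ?thesis using that by (simp add: P_def)
  next
    case False
    have z1: "cmod z \<le> 1" using that by simp
    show ?thesis using sph_helper[OF sg z1 False] False that
      by (simp add: P_def F_def norm_power mult_less_cancel_right)
  qed
  have oP: "openin (top_of_set ?D) P"
  proof -
    have "open {z::complex. (cmod (1 - \<sigma> * z))^2 < r * (cmod (1 + \<sigma> * z))^2}"
      by (intro open_Collect_less continuous_intros)
    moreover have "P = ?D \<inter> {z::complex. (cmod (1 - \<sigma> * z))^2 < r * (cmod (1 + \<sigma> * z))^2}"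
      by (auto simp: P_def)
    ultimately show ?thesis by (auto simp: openin_open)
  qed
  have Pchar: "z \<in> P \<longleftrightarrow> (\<exists>u\<in>ball 0 r. ?q z = G u)" if zD: "z \<in> ?D" for z
  proof
    assume "z \<in> P"
    then have nz: "\<sigma> * z \<noteq> -1" and Fz: "cmod (F z) < r" using Pchar0[OF zD] by auto
    define v0 where "v0 = cinv (\<sigma> * z)"
    have m: "cmod (\<sigma> * z) \<le> 1" using ss zD by (simp add: norm_mult)
    have r0: "0 \<le> Re v0" using C6[OF m nz] v0_def by simp
    have e: "cinv v0 = \<sigma> * z" using C5[OF nz] v0_def by simp
    have "(vv (F z))^2 = v0^2" using vv_sq by (simp add: F_def v0_def)
    then have "vv (F z) = v0 \<or> vv (F z) = - v0" by (simp add: power2_eq_iff)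
    then have "?q z = ?q (s (F z))"
    proof
      assume "vv (F z) = v0"
      then have "s (F z) = z" using e ss by (simp add: s_def mult.assoc[symmetric])
      then show ?thesis by simp
    next
      assume a: "vv (F z) = - v0"
      then have "Re v0 = 0" using vv_re[of "F z"] r0 by simp
      then have c1: "cmod z = 1" and cv: "- v0 = cnj v0" using C3[of v0] e ss
        by (auto simp: norm_mult complex_eq_iff)
      have "s (F z) = \<sigma> * cnj (cinv v0)" using a cv by (simp add: s_def C4)
      also have "\<dots> = cnj z" using e ss by (simp add: mult.assoc[symmetric])
      finally show ?thesis using qm_sph[OF zD] c1 zD by (simp add: qm_sph)
    qed
    then show "\<exists>u\<in>ball 0 r. ?q z = G u" using Fz by (auto simp: hG)
  next
    assume "\<exists>u\<in>ball 0 r. ?q z = G u"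
    then obtain u where u: "u \<in> ball 0 r" "?q z = ?q (s u)" by (auto simp: hG)
    then have alt: "s u = z \<or> (cmod z = 1 \<and> s u = cnj z)" using qm_sph[OF zD s_in] by simp
    have ns: "\<sigma> * s u \<noteq> -1"
    proof -
      have "\<sigma> * s u = cinv (vv u)" by (simp add: s_def mult.assoc[symmetric] ss)
      then show ?thesis using C9(2)[OF vv_re[of u]] by (metis add_eq_0_iff add.commute)
    qed
    have "\<sigma> * z \<noteq> -1 \<and> F z = u"
      using alt
    proof
      assume "s u = z" then show ?thesis using ns Fs by auto
    next
      assume a: "cmod z = 1 \<and> s u = cnj z"
      then have "z = cnj (s u)" by simp
      moreover have "\<sigma> * cnj (s u) \<noteq> -1" using ns ss
        by (metis complex_cnj_cnj complex_cnj_mult complex_cnj_minus complex_cnj_one)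
      moreover have "cmod (s u) = 1" using a by simp
      then have "F (cnj (s u)) = u" using Fresp[of "s u"] Fs by simp
      ultimately show ?thesis by simp
    qed
    then show "z \<in> P" using Pchar0[OF zD] u(1) by simp
  qed
  have wP: "w \<in> P" using Pchar0[OF w] nw by (simp add: r_def)
  have p: "?q w \<in> G ` ball 0 r" using Pchar[OF w] wP by auto
  show ?thesis unfolding ps_eq
    by (rule chart_lemma[OF H[unfolded ps_eq] r Gc[unfolded ps_eq] inj oP Pchar p])
qed



lemma int_chart:
  assumes H: "Hausdorff_space (polygon_surface wd)"
    and qi: "\<And>z z'. z \<in> ball 0 1 \<Longrightarrow> z' \<in> cball 0 1 \<Longrightarrow> qm wd z = qm wd z' \<Longrightarrow> z' = z"
    and w: "w \<in> ball 0 1"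
  shows "qm wd w \<in> surf_interior (polygon_surface wd)"
proof -
  define r where "r = (1 + cmod w) / 2"
  have n: "0 < 1 + cmod w" "cmod w < 1" using w by (auto simp: add_pos_nonneg)
  have r: "0 < r" "r < 1" "cmod w < r" unfolding r_def using n by (simp_all add: field_simps)
  have sub: "cball (0::complex) r \<subseteq> cball 0 1" "ball (0::complex) r \<subseteq> cball 0 1" using r by auto
  have Gc: "continuous_map (top_of_set (cball 0 r)) (polygon_surface wd) (qm wd)"
  proof -
    have "continuous_map (top_of_set (cball 0 1)) (polygon_surface wd) (qm wd)"
      unfolding ps_eq using qt_cont[of "top_of_set (cball 0 1)" "qm wd"] by simp
    then have "continuous_map (subtopology (top_of_set (cball 0 1)) (cball 0 r)) (polygon_surface wd) (qm wd)"
      by (rule continuous_map_from_subtopology)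
    then show ?thesis using sub by (simp add: subtopology_subtopology Int_absorb1)
  qed
  have inj: "inj_on (qm wd) (cball 0 r)"
    by (rule inj_onI) (use qi r sub in \<open>force\<close>)
  have oP: "openin (top_of_set (cball 0 1)) (ball 0 r)"
    unfolding openin_open using r by (intro exI[of _ "ball 0 r"]) auto
  have Pchar: "z \<in> ball 0 r \<longleftrightarrow> (\<exists>u\<in>ball 0 r. qm wd z = qm wd u)" if "z \<in> cball 0 1" for z
  proof
    assume "\<exists>u\<in>ball 0 r. qm wd z = qm wd u"
    then obtain u where "u \<in> ball 0 r" "qm wd z = qm wd u" by blast
    then show "z \<in> ball 0 r" using qi[of u z] that r by force
  qed auto
  have p: "qm wd w \<in> qm wd ` ball 0 r" using r by auto
  show ?thesis unfolding ps_eq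
    by (rule chart_lemma[OF H[unfolded ps_eq] r(1) Gc[unfolded ps_eq] inj oP Pchar p])
qed

lemma rp_int_chart:
  assumes H: "Hausdorff_space (polygon_surface w_rp)" and w: "w \<in> ball 0 1"
  shows "qm w_rp w \<in> surf_interior (polygon_surface w_rp)"
  by (rule int_chart[OF H _ w]) (use qm_rp in force)



lemma rp_bd_chart:
  assumes H: "Hausdorff_space (polygon_surface w_rp)" and z0: "cmod z0 = 1"
  shows "qm w_rp z0 \<in> surf_interior (polygon_surface w_rp)"
proof -
  let ?D = "cball (0::complex) 1"
  let ?q = "qm w_rp"
  define N where "N u = sqrt (1 + (Re u)^2 + (Im u)^2)" for u :: complex
  define e where "e u = (1 + \<i> * of_real (Re u)) / of_real (N u)" for u
  define sg where "sg u = (if Im u \<le> 0 then -1 else 1 :: real)" for u :: complex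
  define s where "s u = of_real (sg u) * (z0 * e u)" for u
  define G where "G u = (if Im u \<le> 0 then ?q (- (z0 * e u)) else ?q (z0 * e u))" for u
  define X where "X z = Re (cnj z0 * z)" for z
  define Y where "Y z = Im (cnj z0 * z)" for z
  define F where "F z = Complex (Y z / X z) (sqrt (1 - (cmod z)^2) / X z)" for z
  have zz: "cnj z0 * z0 = 1"
    using complex_norm_square[of z0] z0 by (simp add: mult.commute)
  have N2: "(N u)^2 = 1 + (Re u)^2 + (Im u)^2" for u unfolding N_def
    by (simp add: add_nonneg_nonneg)
  have Npos: "0 < N u" for u unfolding N_def by (simp add: add_pos_nonneg)
  have Ree: "Re (e u) = 1 / N u" and Ime: "Im (e u) = Re u / N u" for u
    by (simp_all add: e_def Re_divide_of_real Im_divide_of_real)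
  have sg2: "sg u * sg u = 1" "\<bar>sg u\<bar> = 1" for u by (auto simp: sg_def)
  have cs: "cnj z0 * s u = of_real (sg u) * e u" for u
  proof -
    have "cnj z0 * s u = of_real (sg u) * ((cnj z0 * z0) * e u)" by (simp add: s_def mult_ac)
    then show ?thesis using zz by simp
  qed
  have Xs: "X (s u) = sg u / N u" and Ys: "Y (s u) = sg u * Re u / N u" for u
    by (simp_all add: X_def Y_def cs Ree Ime)
  have cmod_cz: "cmod (cnj z0 * z) = cmod z" for z using z0 by (simp add: norm_mult)
  have cmz: "(cmod z)^2 = (X z)^2 + (Y z)^2" for z
  proof -
    have "(cmod z)^2 = (cmod (cnj z0 * z))^2" using cmod_cz by simp
    also have "\<dots> = (X z)^2 + (Y z)^2" unfolding X_def Y_def by (rule cmod_power2)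
    finally show ?thesis .
  qed
  have cms: "(cmod (s u))^2 = (1 + (Re u)^2) / (N u)^2" for u
    using cmz[of "s u"] sg2[of u] by (simp add: Xs Ys power_divide power_mult_distrib field_simps)
       (simp add: power2_eq_square add_divide_distrib)
  have hs: "1 - (cmod (s u))^2 = (Im u)^2 / (N u)^2" for u
  proof -
    have d: "(N u)^2 \<noteq> 0" using Npos[of u] by simp
    have "1 - (cmod (s u))^2 = ((N u)^2 - (1 + (Re u)^2)) / (N u)^2"
      unfolding cms using d by (simp add: diff_divide_distrib)
    also have "(N u)^2 - (1 + (Re u)^2) = (Im u)^2" unfolding N2 by simp
    finally show ?thesis .
  qed
  have s_in: "s u \<in> ?D" for u
  proof -
    have "(cmod (s u))^2 \<le> 1" using hs[of u] by (smt (verit) divide_nonneg_nonneg zero_le_power2)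
    then show ?thesis by (simp add: power_le_one_iff abs_square_le_1)
  qed
  have Fs: "F (s u) = u" for u
  proof -
    have "sqrt (1 - (cmod (s u))^2) = \<bar>Im u\<bar> / N u" using hs[of u] Npos[of u]
      by (simp add: real_sqrt_divide)
    moreover have "\<bar>Im u\<bar> * sg u = Im u" "Im u * sg u = \<bar>Im u\<bar>" by (auto simp: sg_def)
    ultimately show ?thesis using Npos[of u] sg2[of u]
      by (simp add: F_def Xs Ys complex_eq_iff field_simps)
  qed
  have Fresp: "F (- z) = F z" if "cmod z = 1" for z
  proof -
    have "X (-z) = - X z" "Y (-z) = - Y z" by (simp_all add: X_def Y_def)
    then show ?thesis using that unfolding F_def by simp
  qed
  have Gc: "continuous_map (top_of_set (cball 0 1)) (polygon_surface w_rp) G"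
    unfolding ps_eq G_def
  proof (rule paste_lemma)
    have ce: "continuous_on (cball 0 1) e"
      unfolding e_def N_def using Npos unfolding N_def
      by (intro continuous_intros) (auto, metis less_irrefl)
    show "continuous_on (cball 0 1) (\<lambda>u. - (z0 * e u))" using ce by (intro continuous_intros)
    show "continuous_on (cball 0 1) (\<lambda>u. z0 * e u)" using ce by (intro continuous_intros)
    have ce1: "cmod (z0 * e u) = cmod (s u)" for u using sg2[of u] by (simp add: s_def norm_mult)
    show "(\<lambda>u. - (z0 * e u)) ` cball 0 1 \<subseteq> ?D" using s_in ce1 by auto
    show "(\<lambda>u. z0 * e u) ` cball 0 1 \<subseteq> ?D" using s_in ce1 by auto
    fix u assume "u \<in> cball 0 1" "Im u = 0"
    then have "(cmod (s u))^2 = 1" using hs[of u] by simp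
    then have "cmod (s u) = 1" using norm_ge_zero[of "s u"] by (simp add: power2_eq_1_iff)
    then have m1: "cmod (z0 * e u) = 1" using ce1[of u] by simp
    have in2: "z0 * e u \<in> ?D" using m1 by simp
    have in1: "- (z0 * e u) \<in> ?D" using m1 by simp
    show "?q (- (z0 * e u)) = ?q (z0 * e u)" using qm_rp[OF in2 in1] m1 by simp
  qed
  have hG: "G u = ?q (s u)" for u by (simp add: G_def s_def sg_def)
  have inj: "inj_on G (cball 0 1)"
  proof (rule inj_onI)
    fix u u' assume "u \<in> cball 0 1" "u' \<in> cball 0 1" "G u = G u'"
    then have "?q (s u) = ?q (s u')" by (simp add: hG)
    then have "s u' = s u \<or> (cmod (s u) = 1 \<and> s u' = - s u)" using qm_rp[OF s_in s_in] by simp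
    then have "F (s u') = F (s u)" using Fresp by auto
    then show "u = u'" using Fs by simp
  qed
  define P where "P = {z \<in> ?D. 1 < 2 * (X z)^2}"
  have oP: "openin (top_of_set ?D) P"
  proof -
    have "open {z::complex. 1 < 2 * (X z)^2}"
      unfolding X_def by (intro open_Collect_less continuous_intros)
    moreover have "P = ?D \<inter> {z::complex. 1 < 2 * (X z)^2}" by (auto simp: P_def)
    ultimately show ?thesis by (auto simp: openin_open)
  qed
  have Pchar: "z \<in> P \<longleftrightarrow> (\<exists>u\<in>ball 0 1. ?q z = G u)" if zD: "z \<in> ?D" for z
  proof
    assume "z \<in> P"
    then have x2: "1 < 2 * (X z)^2" by (simp add: P_def)
    define x where "x = X z"
    define y where "y = Y z"
    define h where "h = sqrt (1 - (cmod z)^2)"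
    have "cmod z \<le> 1" using zD by simp
    then have zc: "(cmod z)^2 \<le> 1" by (rule power_le_one[OF norm_ge_zero])
    have h2: "h^2 = 1 - x^2 - y^2" using zc cmz[of z] by (simp add: h_def x_def y_def)
    have h0: "0 \<le> h" using zc by (simp add: h_def)
    have xn: "x \<noteq> 0" using x2 x_def by auto
    have zdec: "z = z0 * Complex x y"
    proof -
      have "Complex x y = cnj z0 * z" by (simp add: x_def y_def X_def Y_def complex_eq_iff)
      then show ?thesis by (simp add: mult.assoc[symmetric] zz[unfolded mult.commute[of "cnj z0"]])
    qed
    define u where "u = F z"
    have u: "u = Complex (y / x) (h / x)" by (simp add: u_def F_def x_def y_def h_def)
    have cu: "(cmod u)^2 = (1 - x^2) / x^2"
      using h2 xn by (simp add: u cmod_power2 power_divide field_simps)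
    have ub: "u \<in> ball 0 1"
    proof -
      have a: "x^2 * (1 + (cmod u)^2) = 1" using cu xn by (simp add: field_simps)
      have b: "1 < 2 * x^2" using x2 x_def by simp
      have "x^2 * (1 + (cmod u)^2) < x^2 * 2" using a b by linarith
      then have "(cmod u)^2 < 1" using xn by (simp add: mult_less_cancel_left_pos)
      then have "cmod u < 1" by (metis abs_norm_cancel abs_square_less_1)
      then show ?thesis by simp
    qed
    have Nu: "N u = 1 / \<bar>x\<bar>"
    proof -
      have "(N u)^2 = (1 / \<bar>x\<bar>)^2" using N2[of u] h2 xn
        by (simp add: u power_divide field_simps)
      then show ?thesis using Npos[of u] xn by (simp add: power2_eq_iff_nonneg)
    qed
    have Reu: "Re u = y / x" by (simp add: u)
    have "e u = (1 + \<i> * of_real (y/x)) * of_real \<bar>x\<bar>" unfolding e_def Nu Reu by simp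
    then have eu: "e u = of_real (sgn x) * Complex x y"
      using xn by (cases "x > 0") (auto simp: complex_eq_iff field_simps sgn_if)
    have "s u = z \<or> (cmod z = 1 \<and> s u = - z)"
    proof (cases "x > 0")
      case True
      show ?thesis
      proof (cases "h = 0")
        case True
        then have "(cmod z)^2 = 1" using h2 cmz[of z] by (simp add: x_def y_def)
        then have c1: "cmod z = 1" using norm_ge_zero[of z] by (simp add: power2_eq_1_iff)
        have "sg u = -1" using True by (simp add: sg_def u)
        then show ?thesis using c1 eu \<open>x > 0\<close> zdec by (simp add: s_def)
      next
        case False
        then have "sg u = 1" using h0 \<open>x > 0\<close> by (simp add: sg_def u divide_le_0_iff)
        then show ?thesis using eu \<open>x > 0\<close> zdec by (simp add: s_def)
      qed
    next
      case False
      then have xl: "x < 0" using xn by simp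
      then have "sg u = -1" using h0 by (simp add: sg_def u divide_nonneg_neg)
      then show ?thesis using eu xl zdec by (simp add: s_def)
    qed
    then have "?q z = ?q (s u)" using qm_rp[OF zD s_in] by auto
    then show "\<exists>u\<in>ball 0 1. ?q z = G u" using ub by (auto simp: hG)
  next
    assume "\<exists>u\<in>ball 0 1. ?q z = G u"
    then obtain u where u: "u \<in> ball 0 1" "?q z = ?q (s u)" by (auto simp: hG)
    then have "s u = z \<or> (cmod z = 1 \<and> s u = - z)" using qm_rp[OF zD s_in] by simp
    moreover have "X (- z) = - X z" by (simp add: X_def)
    ultimately have "(X z)^2 = (X (s u))^2" by auto
    also have "\<dots> = 1 / (N u)^2" using sg2[of u] by (simp add: Xs power_divide power2_eq_square)
    finally have xz: "(X z)^2 = 1 / (N u)^2" .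
    have "cmod u < 1" using u(1) by simp
    then have "(cmod u)^2 < 1" by (simp add: power_less_one_iff abs_square_less_1)
    then have n2: "(N u)^2 < 2" using N2[of u] by (simp add: cmod_power2)
    have p1: "(N u)^2 * (X z)^2 = 1" using xz Npos[of u] by (simp add: field_simps)
    have "X z \<noteq> 0" using p1 by (metis mult_zero_right power_zero_numeral zero_neq_one)
    then have "0 < (X z)^2" by simp
    then have "(N u)^2 * (X z)^2 < 2 * (X z)^2" using n2 by (simp add: mult_strict_right_mono)
    then have "1 < 2 * (X z)^2" using p1 by simp
    then show "z \<in> P" using zD by (simp add: P_def)
  qed
  have "X z0 = 1" unfolding X_def zz by simp
  then have z0P: "z0 \<in> P" using z0 by (simp add: P_def)
  have p: "?q z0 \<in> G ` ball 0 1" using Pchar[of z0] z0P z0 by auto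
  show ?thesis unfolding ps_eq
    by (rule chart_lemma[OF H[unfolded ps_eq] _ Gc[unfolded ps_eq] inj oP Pchar p]) simp_all
qed



lemma sph_nb: assumes H: "Hausdorff_space (polygon_surface w_sph)"
  shows "surf_boundary (polygon_surface w_sph) = {}"
proof -
  have "x \<in> surf_interior (polygon_surface w_sph)" if xt: "x \<in> topspace (polygon_surface w_sph)" for x
  proof -
    obtain w where w: "w \<in> cball 0 1" "x = qm w_sph w" using xt by (auto simp: ps_eq qt_topspace)
    show ?thesis
    proof (cases "w = -1")
      case True
      then show ?thesis using sph_chart[OF H, of "-1" w] w by simp
    next
      case False
      then show ?thesis using sph_chart[OF H, of 1 w] w by simp
    qed
  qed
  then show ?thesis by (auto simp: surf_boundary_def)
qed

lemma rp_nb: assumes H: "Hausdorff_space (polygon_surface w_rp)"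
  shows "surf_boundary (polygon_surface w_rp) = {}"
proof -
  have "x \<in> surf_interior (polygon_surface w_rp)" if xt: "x \<in> topspace (polygon_surface w_rp)" for x
  proof -
    obtain w where w: "w \<in> cball 0 1" "x = qm w_rp w" using xt by (auto simp: ps_eq qt_topspace)
    show ?thesis
    proof (cases "cmod w < 1")
      case True
      then show ?thesis using rp_int_chart[OF H, of w] w by simp
    next
      case False
      then have "cmod w = 1" using w by simp
      then show ?thesis using rp_bd_chart[OF H, of w] w by simp
    qed
  qed
  then show ?thesis by (auto simp: surf_boundary_def)
qed

lemma nat_le4: "(n::nat) \<le> 4 \<Longrightarrow> n = 0 \<or> n = 1 \<or> n = 2 \<or> n = 3 \<or> n = 4" by auto

theorem lemma3p1:
  fixes X :: "'a topology" and A B :: "'a set" and k :: surf_kind and s :: nat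
  assumes "stratified_surface X A B"
    and "connected_space X"
    and "X homeomorphic_space surface_model k s"
    and "mu_conn k s (card A) (card B) \<le> 0"
  shows "iso_to_model X A B (Sphere_H 0) 0 0 0 \<or>
         iso_to_model X A B (Proj_H 0) 0 0 0 \<or>
         iso_to_model X A B (Sphere_H 0) 1 0 0 \<or>
         iso_to_model X A B (Sphere_H 0) 0 1 0 \<or>
         iso_to_model X A B (Sphere_H 0) 1 0 1 \<or>
         iso_to_model X A B (Sphere_H 0) 0 2 0 \<or>
         iso_to_model X A B (Proj_H 0) 0 1 0 \<or>
         iso_to_model X A B (Sphere_H 1) 0 0 0 \<or>
         iso_to_model X A B (Klein_H 0) 0 0 0 \<or>
         iso_to_model X A B (Sphere_H 0) 1 1 0 \<or>
         iso_to_model X A B (Sphere_H 0) 1 0 2 \<or>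
         iso_to_model X A B (Proj_H 0) 1 0 0 \<or>
         iso_to_model X A B (Sphere_H 0) 2 0 0"
proof -
  let ?M = "surface_model k s"
  obtain f g where fg: "homeomorphic_maps X ?M f g" using assms(3) homeomorphic_space_def by blast
  have hf: "homeomorphic_map X ?M f" using fg homeomorphic_maps_map by blast
  have SX: "surface_with_boundary X" "finite A" "finite B" "A \<subseteq> surf_interior X" "B \<subseteq> surf_boundary X"
    using assms(1) by (auto simp: stratified_surface_def)
  have AX: "A \<subseteq> topspace X" using SX(4) by (auto simp: surf_interior_def)
  have BX: "B \<subseteq> topspace X" using SX(5) by (auto simp: surf_boundary_def)
  have inj: "inj_on f (topspace X)" using hf homeomorphic_imp_injective_map by blast
  have cA: "card (f ` A) = card A" using card_image inj_on_subset[OF inj AX] by blast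
  have cB: "card (f ` B) = card B" using card_image inj_on_subset[OF inj BX] by blast
  have HM: "Hausdorff_space ?M" using SX(1) assms(3) homeomorphic_Hausdorff_space
    by (auto simp: surface_with_boundary_def)
  have strat: "stratified_surface ?M (f ` A) (f ` B)"
    unfolding stratified_surface_def
    using surface_transfer[OF hf SX(1)] SX interior_transfer[OF hf] boundary_transfer[OF hf] by auto
  have iso: "iso_to_model X A B k s (card A) (card B)"
    unfolding iso_to_model_def strat_iso_def using strat cA cB hf by blast
  have hb: "card B = 0" if s0: "s = 0" and kk: "k = Sphere_H 0 \<or> k = Proj_H 0"
  proof -
    have "surf_boundary ?M = {}" using kk s0 HM model_sph model_rp sph_nb rp_nb by auto
    then have "f ` B = {}" using boundary_transfer[OF hf] SX(5) by blast
    then show ?thesis by simp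
  qed
  have mu: "2 * kind_genus k + real (card A) + real s + real (card B) / 2 - 2 \<le> 0"
    using assms(4) by (simp add: mu_conn_def)
  show ?thesis
  proof (cases k)
    case (Sphere_H a)
    have "real (4*a + 2 * card A + 2 * s + card B) \<le> 4" using mu Sphere_H by simp
    then have ineq: "4*a + 2 * card A + 2 * s + card B \<le> 4" by linarith
    show ?thesis
    proof (cases "a = 0")
      case False
      then have "a = 1" "card A = 0" "s = 0" "card B = 0" using ineq by auto
      then show ?thesis using iso Sphere_H by simp
    next
      case True
      have hb': "s = 0 \<Longrightarrow> card B = 0" using hb Sphere_H True by simp
      have "s \<le> 4" "card A \<le> 4" "card B \<le> 4" using ineq by auto
      then show ?thesis using iso Sphere_H True ineq hb'
        by (elim nat_le4[elim_format] disjE) simp_all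
    qed
  next
    case (Proj_H a)
    have "real (4*a + 2 + 2 * card A + 2 * s + card B) \<le> 4" using mu Proj_H by simp
    then have ineq: "4*a + 2 + 2 * card A + 2 * s + card B \<le> 4" by linarith
    then have a0: "a = 0" by simp
    have hb': "s = 0 \<Longrightarrow> card B = 0" using hb Proj_H a0 by simp
    have "s \<le> 4" "card A \<le> 4" "card B \<le> 4" using ineq by auto
    then show ?thesis using iso Proj_H a0 ineq hb'
      by (elim nat_le4[elim_format] disjE) simp_all
  next
    case (Klein_H a)
    have "real (4*a + 4 + 2 * card A + 2 * s + card B) \<le> 4" using mu Klein_H by simp
    then have ineq: "4*a + 4 + 2 * card A + 2 * s + card B \<le> 4" by linarith
    then have "a = 0" "card A = 0" "s = 0" "card B = 0" by auto
    then show ?thesis using iso Klein_H by simp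
  qed
qed


end
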